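(* Let $\Gamma=\mathbb{Z}/m_1\mathbb{Z}\times\dots\times\mathbb{Z}/m_l\mathbb{Z}$, written multiplicatively with generators $x_1,\dots,x_l$ ($x_i$ of order $m_i$), so that elements of $\mathbb{C}\Gamma$ are Laurent polynomials $P(x_1,\dots,x_l)$ reduced modulo $x_i^{m_i}=1$. Let $P\in\mathbb{C}\Gamma$ be reciprocal, let $k$ be the $l_1$-norm of its coefficients, and let $|\lambda|<1/k$. For each $i$ let $\xi_{m_i}$ be a primitive $m_i$-th root of unity. Then \[ m_\Gamma(P,\lambda)=\frac{1}{|\Gamma|}\log\left(\prod_{j_1=0}^{m_1-1}\cdots\prod_{j_l=0}^{m_l-1}\Big(1-\lambda P\big(\xi_{m_1}^{j_1},\dots,\xi_{m_l}^{j_l}\big)\Big)\right), \] where $|\Gamma|=m_1\cdots m_l$ and the logarithm of the product is the sum of the principal logarithms of its factors.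
   Context: For a group $\Gamma$ and $Q=\sum_{g\in\Gamma}c_g g\in\mathbb{C}\Gamma$ (finite sum), the reciprocal is $Q^*=\sum_g\overline{c_g}\,g^{-1}$, and $Q$ is reciprocal if $Q=Q^*$. For reciprocal $P\in\mathbb{C}\Gamma$ with $l_1$-norm $k=\sum_g|c_g|$ and $|\lambda|<1/k$, define $m_\Gamma(P,\lambda)=-\sum_{n\ge1}a_n\lambda^n/n$, where $a_n$ is the coefficient of the identity element in $P^n$. *)

theory Defs
  imports "HOL-Analysis.Analysis"
begin

text \<open>Elements of the group algebra are coefficient functions c :: 'g \<Rightarrow> complex,
  vanishing outside the (finite) carrier S.\<close>

definition ga_mult :: "'g set \<Rightarrow> ('g \<Rightarrow> 'g \<Rightarrow> 'g) \<Rightarrow> ('g \<Rightarrow> 'g)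
    \<Rightarrow> ('g \<Rightarrow> complex) \<Rightarrow> ('g \<Rightarrow> complex) \<Rightarrow> 'g \<Rightarrow> complex" where
  "ga_mult S gop giv c d g = (if g \<in> S then (\<Sum>h\<in>S. c h * d (gop (giv h) g)) else 0)"

primrec ga_pow :: "'g set \<Rightarrow> ('g \<Rightarrow> 'g \<Rightarrow> 'g) \<Rightarrow> ('g \<Rightarrow> 'g) \<Rightarrow> 'g
    \<Rightarrow> ('g \<Rightarrow> complex) \<Rightarrow> nat \<Rightarrow> 'g \<Rightarrow> complex" where
  "ga_pow S gop giv e c 0 = (\<lambda>g. if g = e then 1 else 0)"
| "ga_pow S gop giv e c (Suc n) = ga_mult S gop giv c (ga_pow S gop giv e c n)"

definition ga_reciprocal :: "'g set \<Rightarrow> ('g \<Rightarrow> 'g) \<Rightarrow> ('g \<Rightarrow> complex) \<Rightarrow> bool" where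
  "ga_reciprocal S giv c \<longleftrightarrow> (\<forall>g\<in>S. c g = cnj (c (giv g)))"

definition ga_l1norm :: "'g set \<Rightarrow> ('g \<Rightarrow> complex) \<Rightarrow> real" where
  "ga_l1norm S c = (\<Sum>g\<in>S. norm (c g))"

definition mGamma :: "'g set \<Rightarrow> ('g \<Rightarrow> 'g \<Rightarrow> 'g) \<Rightarrow> ('g \<Rightarrow> 'g) \<Rightarrow> 'g
    \<Rightarrow> ('g \<Rightarrow> complex) \<Rightarrow> complex \<Rightarrow> complex" where
  "mGamma S gop giv e c lam =
     - (\<Sum>n. ga_pow S gop giv e c (Suc n) e * lam ^ Suc n / of_nat (Suc n))"

text \<open>An element x_1^{j_1}...x_l^{j_l} is encoded by the exponent function j :: nat \<Rightarrow> nat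
  with j i < m i for i < l and j i = 0 for i \<ge> l.\<close>

definition cyc_carrier :: "(nat \<Rightarrow> nat) \<Rightarrow> nat \<Rightarrow> (nat \<Rightarrow> nat) set" where
  "cyc_carrier m l = {j. (\<forall>i<l. j i < m i) \<and> (\<forall>i\<ge>l. j i = 0)}"

definition cyc_mult :: "(nat \<Rightarrow> nat) \<Rightarrow> nat \<Rightarrow> (nat \<Rightarrow> nat) \<Rightarrow> (nat \<Rightarrow> nat) \<Rightarrow> nat \<Rightarrow> nat" where
  "cyc_mult m l a b = (\<lambda>i. if i < l then (a i + b i) mod m i else 0)"

definition cyc_inv :: "(nat \<Rightarrow> nat) \<Rightarrow> nat \<Rightarrow> (nat \<Rightarrow> nat) \<Rightarrow> nat \<Rightarrow> nat" where
  "cyc_inv m l a = (\<lambda>i. if i < l then (m i - a i) mod m i else 0)"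

definition cyc_unit :: "nat \<Rightarrow> nat" where
  "cyc_unit = (\<lambda>i. 0)"

definition cyc_eval :: "(nat \<Rightarrow> nat) \<Rightarrow> nat \<Rightarrow> ((nat \<Rightarrow> nat) \<Rightarrow> complex) \<Rightarrow> (nat \<Rightarrow> complex) \<Rightarrow> complex" where
  "cyc_eval m l c z = (\<Sum>g\<in>cyc_carrier m l. c g * (\<Prod>i<l. z i ^ g i))"

definition primitive_root_of_unity :: "nat \<Rightarrow> complex \<Rightarrow> bool" where
  "primitive_root_of_unity n z \<longleftrightarrow> z ^ n = 1 \<and> (\<forall>d. 0 < d \<and> d < n \<longrightarrow> z ^ d \<noteq> 1)"

end

theory Submission
  imports Defs
begin

lemma pow_mod_root: "(w::complex) ^ m = 1 \<Longrightarrow> w ^ (x mod m) = w ^ x"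
proof -
  assume "w ^ m = 1"
  have "w ^ x = w ^ (m * (x div m) + x mod m)" by simp
  also have "\<dots> = (w ^ m) ^ (x div m) * w ^ (x mod m)" by (simp only: power_add power_mult)
  finally show ?thesis using \<open>w ^ m = 1\<close> by simp
qed

lemma mod_inv1: "0 < (m::nat) \<Longrightarrow> h < m \<Longrightarrow> g < m \<Longrightarrow> (h + ((m - h) mod m + g) mod m) mod m = g"
proof -
  assume a: "0 < m" "h < m" "g < m"
  have "(h + ((m - h) mod m + g) mod m) mod m = (h + ((m - h) + g)) mod m"
    by (metis mod_add_left_eq mod_add_right_eq)
  also have "\<dots> = (m + g) mod m" using a by simp
  finally show ?thesis using a by simp
qed

lemma mod_inv2: "0 < (m::nat) \<Longrightarrow> h < m \<Longrightarrow> g < m \<Longrightarrow> ((m - h) mod m + (h + g) mod m) mod m = g"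
proof -
  assume a: "0 < m" "h < m" "g < m"
  have "((m - h) mod m + (h + g) mod m) mod m = ((m - h) + (h + g)) mod m"
    by (metis mod_add_left_eq mod_add_right_eq)
  also have "\<dots> = (m + g) mod m" using a by simp
  finally show ?thesis using a by simp
qed

lemma carrier_factor:
  "(\<Sum>j\<in>cyc_carrier m l. \<Prod>i<l. f i (j i)) = (\<Prod>i<l. \<Sum>t<m i. (f i t :: complex))"
proof (induction l)
  case 0
  have "cyc_carrier m 0 = {\<lambda>i. 0}" unfolding cyc_carrier_def by auto
  then show ?case by simp
next
  case (Suc l)
  define \<phi> where "\<phi> = (\<lambda>(j::nat\<Rightarrow>nat, t::nat). j(l := t))"
  have img: "cyc_carrier m (Suc l) = \<phi> ` (cyc_carrier m l \<times> {..<m l})"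
  proof
    show "cyc_carrier m (Suc l) \<subseteq> \<phi> ` (cyc_carrier m l \<times> {..<m l})"
    proof
      fix j assume j: "j \<in> cyc_carrier m (Suc l)"
      have "j = \<phi> (j(l := 0), j l)" unfolding \<phi>_def by simp
      moreover have "(j(l := 0), j l) \<in> cyc_carrier m l \<times> {..<m l}"
        using j unfolding cyc_carrier_def by auto
      ultimately show "j \<in> \<phi> ` (cyc_carrier m l \<times> {..<m l})" by blast
    qed
  next
    show "\<phi> ` (cyc_carrier m l \<times> {..<m l}) \<subseteq> cyc_carrier m (Suc l)"
      unfolding \<phi>_def cyc_carrier_def by (auto simp: less_Suc_eq)
  qed
  have inj: "inj_on \<phi> (cyc_carrier m l \<times> {..<m l})"
  proof (rule inj_onI)
    fix a b assume a: "a \<in> cyc_carrier m l \<times> {..<m l}" and b: "b \<in> cyc_carrier m l \<times> {..<m l}"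
      and e: "\<phi> a = \<phi> b"
    obtain ja ta jb tb where ab: "a = (ja, ta)" "b = (jb, tb)" by fastforce
    have "ta = tb" using e ab unfolding \<phi>_def by (metis case_prod_conv fun_upd_same)
    moreover have "ja = jb"
    proof
      fix i show "ja i = jb i"
      proof (cases "i = l")
        case True then show ?thesis using a b ab unfolding cyc_carrier_def by auto
      next
        case False then show ?thesis using e ab unfolding \<phi>_def by (metis case_prod_conv fun_upd_other)
      qed
    qed
    ultimately show "a = b" using ab by simp
  qed
  have "(\<Sum>j\<in>cyc_carrier m (Suc l). \<Prod>i<Suc l. f i (j i))
      = (\<Sum>p\<in>cyc_carrier m l \<times> {..<m l}. \<Prod>i<Suc l. f i (\<phi> p i))"
    unfolding img by (simp add: sum.reindex[OF inj])
  also have "\<dots> = (\<Sum>p\<in>cyc_carrier m l \<times> {..<m l}. (\<Prod>i<l. f i (fst p i)) * f l (snd p))"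
    by (rule sum.cong) (auto simp: \<phi>_def)
  also have "\<dots> = (\<Sum>j\<in>cyc_carrier m l. \<Sum>t<m l. (\<Prod>i<l. f i (j i)) * f l t)"
    apply (simp add: sum.cartesian_product split_def)
    done
  also have "\<dots> = (\<Sum>j\<in>cyc_carrier m l. \<Prod>i<l. f i (j i)) * (\<Sum>t<m l. f l t)"
    by (simp only: sum_product)
  also have "\<dots> = (\<Prod>i<Suc l. \<Sum>t<m i. f i t)" using Suc by simp
  finally show ?case .
qed
definition chi :: "nat \<Rightarrow> (nat \<Rightarrow> complex) \<Rightarrow> (nat \<Rightarrow> nat) \<Rightarrow> (nat \<Rightarrow> nat) \<Rightarrow> complex" where
  "chi l \<xi> j g = (\<Prod>i<l. (\<xi> i ^ j i) ^ g i)"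

definition FT :: "(nat \<Rightarrow> nat) \<Rightarrow> nat \<Rightarrow> (nat \<Rightarrow> complex) \<Rightarrow> ((nat \<Rightarrow> nat) \<Rightarrow> complex) \<Rightarrow> (nat \<Rightarrow> nat) \<Rightarrow> complex" where
  "FT m l \<xi> d j = (\<Sum>g\<in>cyc_carrier m l. d g * chi l \<xi> j g)"

lemma chi_mult:
  assumes roots: "\<forall>i<l. \<xi> i ^ m i = 1"
  shows "chi l \<xi> j (cyc_mult m l a b) = chi l \<xi> j a * chi l \<xi> j b"
proof -
  have "chi l \<xi> j (cyc_mult m l a b) = (\<Prod>i<l. (\<xi> i ^ j i) ^ a i * (\<xi> i ^ j i) ^ b i)"
    unfolding chi_def
  proof (rule prod.cong)
    fix i assume "i \<in> {..<l}"
    then have i: "i < l" by simp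
    have "(\<xi> i ^ j i) ^ m i = 1" using roots i by (metis mult.commute power_mult power_one)
    then have "(\<xi> i ^ j i) ^ ((a i + b i) mod m i) = (\<xi> i ^ j i) ^ (a i + b i)"
      by (rule pow_mod_root)
    then show "(\<xi> i ^ j i) ^ cyc_mult m l a b i = (\<xi> i ^ j i) ^ a i * (\<xi> i ^ j i) ^ b i"
      using i unfolding cyc_mult_def by (simp add: power_add)
  qed simp
  then show ?thesis unfolding chi_def by (simp add: prod.distrib)
qed

lemma cyc_mult_in: assumes "\<forall>i<l. 0 < m i" shows "cyc_mult m l a b \<in> cyc_carrier m l"
  using assms unfolding cyc_mult_def cyc_carrier_def by auto

lemma cyc_inv_in: assumes "\<forall>i<l. 0 < m i" shows "cyc_inv m l a \<in> cyc_carrier m l"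
  using assms unfolding cyc_inv_def cyc_carrier_def by auto

lemma cyc_unit_in: assumes "\<forall>i<l. 0 < m i" shows "cyc_unit \<in> cyc_carrier m l"
  using assms unfolding cyc_unit_def cyc_carrier_def by auto

lemma finite_carrier: "finite (cyc_carrier m l)"
proof -
  have "cyc_carrier m l \<subseteq> (\<lambda>f i. if i < l then f i else 0) ` (PiE {..<l} (\<lambda>i. {..<m i}))"
  proof
    fix j assume j: "j \<in> cyc_carrier m l"
    have "j = (\<lambda>f i. if i < l then f i else 0) (restrict j {..<l})"
      using j unfolding cyc_carrier_def by (auto simp: fun_eq_iff)
    moreover have "restrict j {..<l} \<in> PiE {..<l} (\<lambda>i. {..<m i})"
      using j unfolding cyc_carrier_def by auto
    ultimately show "j \<in> (\<lambda>f i. if i < l then f i else 0) ` (PiE {..<l} (\<lambda>i. {..<m i}))" by blast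
  qed
  then show ?thesis by (rule finite_subset) (intro finite_imageI finite_PiE; simp)
qed

lemma cyc_cancel1:
  assumes "\<forall>i<l. 0 < m i" "h \<in> cyc_carrier m l" "g \<in> cyc_carrier m l"
  shows "cyc_mult m l h (cyc_mult m l (cyc_inv m l h) g) = g"
proof
  fix i show "cyc_mult m l h (cyc_mult m l (cyc_inv m l h) g) i = g i"
    using assms mod_inv1[of "m i" "h i" "g i"]
    unfolding cyc_mult_def cyc_inv_def cyc_carrier_def by auto
qed

lemma cyc_cancel2:
  assumes "\<forall>i<l. 0 < m i" "h \<in> cyc_carrier m l" "g \<in> cyc_carrier m l"
  shows "cyc_mult m l (cyc_inv m l h) (cyc_mult m l h g) = g"
proof
  fix i show "cyc_mult m l (cyc_inv m l h) (cyc_mult m l h g) i = g i"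
    using assms mod_inv2[of "m i" "h i" "g i"]
    unfolding cyc_mult_def cyc_inv_def cyc_carrier_def by auto
qed

lemma FT_mult:
  assumes mp: "\<forall>i<l. 0 < m i" and roots: "\<forall>i<l. \<xi> i ^ m i = 1"
  shows "FT m l \<xi> (ga_mult (cyc_carrier m l) (cyc_mult m l) (cyc_inv m l) c d) j
       = FT m l \<xi> c j * FT m l \<xi> d j"
proof -
  let ?S = "cyc_carrier m l"
  have inner: "(\<Sum>g\<in>?S. d (cyc_mult m l (cyc_inv m l h) g) * chi l \<xi> j g)
       = chi l \<xi> j h * FT m l \<xi> d j" if h: "h \<in> ?S" for h
  proof -
    have "(\<Sum>g\<in>?S. d (cyc_mult m l (cyc_inv m l h) g) * chi l \<xi> j g)
        = (\<Sum>g\<in>?S. d g * chi l \<xi> j (cyc_mult m l h g))"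
      by (rule sum.reindex_bij_witness[where i = "cyc_mult m l h" and j = "cyc_mult m l (cyc_inv m l h)"])
         (auto simp: cyc_cancel1[OF mp h] cyc_cancel2[OF mp h] cyc_mult_in[OF mp])
    also have "\<dots> = chi l \<xi> j h * FT m l \<xi> d j"
      unfolding FT_def chi_mult[OF roots] by (simp add: sum_distrib_left algebra_simps)
    finally show ?thesis .
  qed
  have "FT m l \<xi> (ga_mult ?S (cyc_mult m l) (cyc_inv m l) c d) j
      = (\<Sum>g\<in>?S. \<Sum>h\<in>?S. c h * d (cyc_mult m l (cyc_inv m l h) g) * chi l \<xi> j g)"
    unfolding FT_def ga_mult_def by (simp add: sum_distrib_right)
  also have "\<dots> = (\<Sum>h\<in>?S. c h * (\<Sum>g\<in>?S. d (cyc_mult m l (cyc_inv m l h) g) * chi l \<xi> j g))"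
    by (subst sum.swap) (simp add: sum_distrib_left mult.assoc)
  also have "\<dots> = (\<Sum>h\<in>?S. c h * (chi l \<xi> j h * FT m l \<xi> d j))"
    by (rule sum.cong) (simp_all add: inner)
  also have "\<dots> = FT m l \<xi> c j * FT m l \<xi> d j"
    unfolding FT_def by (simp add: sum_distrib_right mult.assoc)
  finally show ?thesis .
qed

lemma FT_pow:
  assumes mp: "\<forall>i<l. 0 < m i" and roots: "\<forall>i<l. \<xi> i ^ m i = 1"
  shows "FT m l \<xi> (ga_pow (cyc_carrier m l) (cyc_mult m l) (cyc_inv m l) cyc_unit c n) j
       = FT m l \<xi> c j ^ n"
proof (induction n)
  case 0
  have "FT m l \<xi> (\<lambda>g. if g = cyc_unit then 1 else 0) j = chi l \<xi> j cyc_unit"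
    unfolding FT_def using cyc_unit_in[OF mp] finite_carrier[of m l]
    by (subst sum.cong[OF refl, of _ _ "\<lambda>g. if g = cyc_unit then chi l \<xi> j g else 0"]) (auto simp: sum.delta)
  also have "\<dots> = 1" unfolding chi_def cyc_unit_def by simp
  finally show ?case by simp
next
  case (Suc n)
  then show ?case by (simp add: FT_mult[OF mp roots])
qed


lemma orth:
  assumes mp: "\<forall>i<l. 0 < m i" and prim: "\<forall>i<l. primitive_root_of_unity (m i) (\<xi> i)"
    and g: "g \<in> cyc_carrier m l"
  shows "(\<Sum>j\<in>cyc_carrier m l. chi l \<xi> j g) = (if g = cyc_unit then of_nat (\<Prod>i<l. m i) else 0)"
proof -
  have "(\<Sum>j\<in>cyc_carrier m l. chi l \<xi> j g) = (\<Sum>j\<in>cyc_carrier m l. \<Prod>i<l. (\<xi> i ^ g i) ^ j i)"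
    unfolding chi_def by (simp add: power_mult[symmetric] mult.commute)
  also have "\<dots> = (\<Prod>i<l. \<Sum>t<m i. (\<xi> i ^ g i) ^ t)" by (rule carrier_factor)
  also have "\<dots> = (if g = cyc_unit then of_nat (\<Prod>i<l. m i) else 0)"
  proof (cases "g = cyc_unit")
    case True
    then show ?thesis unfolding cyc_unit_def by simp
  next
    case False
    then obtain i where gi: "g i \<noteq> 0" unfolding cyc_unit_def by auto
    then have il: "i < l" using g unfolding cyc_carrier_def by (cases "i < l") auto
    have gm: "g i < m i" using g il unfolding cyc_carrier_def by auto
    have ne: "\<xi> i ^ g i \<noteq> 1" using prim il gi gm unfolding primitive_root_of_unity_def by auto
    have "(\<xi> i ^ g i) ^ m i = 1" using prim il unfolding primitive_root_of_unity_def
      by (metis mult.commute power_mult power_one)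
    then have "(\<Sum>t<m i. (\<xi> i ^ g i) ^ t) = 0" using ne by (simp add: sum_gp_strict)
    then have "(\<Prod>i<l. \<Sum>t<m i. (\<xi> i ^ g i) ^ t) = 0" using il
      by (metis finite_lessThan lessThan_iff prod_zero_iff)
    then show ?thesis using False by simp
  qed
  finally show ?thesis .
qed

lemma inversion:
  assumes mp: "\<forall>i<l. 0 < m i" and prim: "\<forall>i<l. primitive_root_of_unity (m i) (\<xi> i)"
  shows "d cyc_unit = (1 / of_nat (\<Prod>i<l. m i)) * (\<Sum>j\<in>cyc_carrier m l. FT m l \<xi> d j)"
proof -
  have N: "(of_nat (\<Prod>i<l. m i) :: complex) \<noteq> 0" using mp by simp
  have "(\<Sum>j\<in>cyc_carrier m l. FT m l \<xi> d j) = (\<Sum>g\<in>cyc_carrier m l. d g * (\<Sum>j\<in>cyc_carrier m l. chi l \<xi> j g))"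
    unfolding FT_def by (subst sum.swap) (simp add: sum_distrib_left)
  also have "\<dots> = (\<Sum>g\<in>cyc_carrier m l. if g = cyc_unit then d g * of_nat (\<Prod>i<l. m i) else 0)"
    by (rule sum.cong) (simp_all add: orth[OF mp prim])
  also have "\<dots> = d cyc_unit * of_nat (\<Prod>i<l. m i)"
    using finite_carrier[of m l] cyc_unit_in[OF mp] by (simp add: sum.delta)
  finally show ?thesis using N by simp
qed

lemma norm_FT:
  assumes prim: "\<forall>i<l. primitive_root_of_unity (m i) (\<xi> i)" and mp: "\<forall>i<l. 0 < m i"
  shows "norm (FT m l \<xi> c j) \<le> ga_l1norm (cyc_carrier m l) c"
proof -
  have n1: "norm (chi l \<xi> j g) = 1" for g
  proof -
    have "norm (\<xi> i) = 1" if i: "i < l" for i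
    proof -
      have "norm (\<xi> i) ^ m i = 1" using prim i unfolding primitive_root_of_unity_def
        by (metis norm_one norm_power)
      then have "norm (\<xi> i) ^ m i = 1 ^ m i" by simp
    then show ?thesis using mp i by (meson norm_ge_zero power_eq_imp_eq_base zero_le_one)
    qed
    then show ?thesis unfolding chi_def by (simp add: prod_norm[symmetric] norm_power)
  qed
  have "norm (FT m l \<xi> c j) \<le> (\<Sum>g\<in>cyc_carrier m l. norm (c g * chi l \<xi> j g))"
    unfolding FT_def by (rule norm_sum)
  also have "\<dots> = ga_l1norm (cyc_carrier m l) c"
    unfolding ga_l1norm_def by (simp add: norm_mult n1)
  finally show ?thesis .
qed


lemma log_series:
  fixes z :: complex assumes "norm z < 1"
  shows "(\<lambda>n. z ^ Suc n / of_nat (Suc n)) sums (- Ln (1 - z))"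
proof -
  have "(\<lambda>n. - ((- (- z)) ^ n) / of_nat n) sums ln (1 + - z)"
    using Ln_series'[of "- z"] assms by simp
  then have "(\<lambda>n. - (z ^ n) / of_nat n) sums Ln (1 - z)" by simp
  then have "(\<lambda>n. - (z ^ Suc n) / of_nat (Suc n)) sums Ln (1 - z)"
    by (subst sums_Suc_iff) simp
  then have "(\<lambda>n. - (- (z ^ Suc n) / of_nat (Suc n))) sums (- Ln (1 - z))"
    by (rule sums_minus)
  then show ?thesis by simp
qed

theorem corollary6p1:
  fixes l :: nat and m :: "nat \<Rightarrow> nat" and c :: "(nat \<Rightarrow> nat) \<Rightarrow> complex"
    and \<xi> :: "nat \<Rightarrow> complex" and lam :: complex
  assumes m_pos: "\<forall>i<l. 0 < m i"
    and supp: "\<forall>g. g \<notin> cyc_carrier m l \<longrightarrow> c g = 0"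
    and recip: "ga_reciprocal (cyc_carrier m l) (cyc_inv m l) c"
    and prim: "\<forall>i<l. primitive_root_of_unity (m i) (\<xi> i)"
    and lam: "norm lam * ga_l1norm (cyc_carrier m l) c < 1"
  shows "mGamma (cyc_carrier m l) (cyc_mult m l) (cyc_inv m l) cyc_unit c lam
    = (1 / of_nat (\<Prod>i<l. m i)) *
      (\<Sum>j\<in>cyc_carrier m l. Ln (1 - lam * cyc_eval m l c (\<lambda>i. \<xi> i ^ j i)))"
proof -
  let ?S = "cyc_carrier m l"
  define N :: complex where "N = of_nat (\<Prod>i<l. m i)"
  define P where "P j = FT m l \<xi> c j" for j
  have roots: "\<forall>i<l. \<xi> i ^ m i = 1" using prim unfolding primitive_root_of_unity_def by auto
  have ev: "cyc_eval m l c (\<lambda>i. \<xi> i ^ j i) = P j" for j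
    unfolding P_def cyc_eval_def FT_def chi_def by simp
  have a: "ga_pow ?S (cyc_mult m l) (cyc_inv m l) cyc_unit c n cyc_unit = (1 / N) * (\<Sum>j\<in>?S. P j ^ n)" for n
    unfolding N_def P_def
    by (subst inversion[OF m_pos prim]) (simp add: FT_pow[OF m_pos roots])
  have small: "norm (lam * P j) < 1" for j
  proof -
    have "norm (lam * P j) \<le> norm lam * ga_l1norm ?S c"
      unfolding P_def norm_mult by (rule mult_left_mono[OF norm_FT[OF prim m_pos]]) simp
    then show ?thesis using lam by simp
  qed
  have terms: "ga_pow ?S (cyc_mult m l) (cyc_inv m l) cyc_unit c (Suc n) cyc_unit * lam ^ Suc n / of_nat (Suc n)
      = (\<Sum>j\<in>?S. (1 / N) * ((lam * P j) ^ Suc n / of_nat (Suc n)))" for n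
    unfolding a by (simp add: sum_distrib_left sum_distrib_right sum_divide_distrib power_mult_distrib algebra_simps)
  have "(\<lambda>n. \<Sum>j\<in>?S. (1 / N) * ((lam * P j) ^ Suc n / of_nat (Suc n))) sums (\<Sum>j\<in>?S. (1 / N) * (- Ln (1 - lam * P j)))"
    by (intro sums_sum sums_mult log_series small)
  then have "(\<lambda>n. ga_pow ?S (cyc_mult m l) (cyc_inv m l) cyc_unit c (Suc n) cyc_unit * lam ^ Suc n / of_nat (Suc n))
      sums (\<Sum>j\<in>?S. (1 / N) * (- Ln (1 - lam * P j)))"
    unfolding terms .
  then have "mGamma ?S (cyc_mult m l) (cyc_inv m l) cyc_unit c lam = - (\<Sum>j\<in>?S. (1 / N) * (- Ln (1 - lam * P j)))"
    unfolding mGamma_def by (simp add: sums_unique[symmetric])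
  also have "\<dots> = (1 / N) * (\<Sum>j\<in>?S. Ln (1 - lam * P j))"
    by (simp add: sum_distrib_left sum_negf)
  finally show ?thesis unfolding ev N_def .
qed

end
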